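(* For every cocycle $A=(A_1,\dots,A_k)\in\mathrm{SL}_2(\mathbb{R})^k$ the following dichotomy holds: $A$ is diagonalizable, or else $A$ or $A^{-1}$ is quasi-irreducible.
   Context: $\mathrm{SL}_2(\mathbb{R})$ denotes real $2\times2$ matrices with determinant $\pm1$. Let $p=(p_1,\dots,p_k)$ be a probability vector with positive entries, $X=\Sigma^{\mathbb{Z}}$ ($\Sigma=\{1,\dots,k\}$) with $\mathbb{P}=p^{\mathbb{Z}}$ and shift $T$; a cocycle $A$ acts by $A(x)=A_{x_0}$ with iterates $A^{(n)}(x)=A_{x_{n-1}}\cdots A_{x_0}$, and $L(A)\ge0$ is the a.s. limit of $\frac1n\log\|A^{(n)}(x)\|$. The inverse cocycle is $A^{-1}=(A_1^{-1},\dots,A_k^{-1})$ (its iterates are $A^{(n)}(T^{-n}x)^{-1}$), and $L(A^{-1})=L(A)$. If a line $\ell\subset\mathbb{R}^2$ is invariant under all $A_j$, write $A_jv=\lambda_jv$ for $v\in\ell$ and set $L(A|_\ell)=\sum_jp_j\log|\lambda_j|$. $A$ is quasi-irreducible if there is no line $\ell$ invariant under all $A_j$ with $L(A|_\ell)<L(A)$. $A$ is diagonalizable if there exist two transversal lines each invariant under all $A_j$. *)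

theory Defs
  imports "HOL-Analysis.Analysis" "HOL-Probability.Probability"
begin

type_synonym mat2 = "real^2^2"

text \<open>Alphabet \<Sigma> = {1..k}; a cocycle is A :: nat \<Rightarrow> mat2, used on {1..k};
  a probability vector is p :: nat \<Rightarrow> real, used on {1..k}.\<close>

definition prob_vec :: "nat \<Rightarrow> (nat \<Rightarrow> real) \<Rightarrow> bool" where
  "prob_vec k p \<longleftrightarrow> (\<forall>j\<in>{1..k}. p j > 0) \<and> (\<Sum>j=1..k. p j) = 1"

definition SL2pm :: "mat2 \<Rightarrow> bool" where
  "SL2pm M \<longleftrightarrow> det M = 1 \<or> det M = -1"

definition letter_pmf :: "nat \<Rightarrow> (nat \<Rightarrow> real) \<Rightarrow> nat pmf" where
  "letter_pmf k p = embed_pmf (\<lambda>j. if j \<in> {1..k} then p j else 0)"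

definition bernoulli_shift_measure :: "nat \<Rightarrow> (nat \<Rightarrow> real) \<Rightarrow> (int \<Rightarrow> nat) measure" where
  "bernoulli_shift_measure k p = PiM (UNIV :: int set) (\<lambda>_. measure_pmf (letter_pmf k p))"

fun cocycle_iter :: "(nat \<Rightarrow> mat2) \<Rightarrow> (int \<Rightarrow> nat) \<Rightarrow> nat \<Rightarrow> mat2" where
  "cocycle_iter A x 0 = mat 1"
| "cocycle_iter A x (Suc n) = A (x (int n)) ** cocycle_iter A x n"

definition opnorm :: "mat2 \<Rightarrow> real" where
  "opnorm M = onorm (\<lambda>v. M *v v)"

definition lyap :: "nat \<Rightarrow> (nat \<Rightarrow> real) \<Rightarrow> (nat \<Rightarrow> mat2) \<Rightarrow> real" where
  "lyap k p A = (THE c. AE x in bernoulli_shift_measure k p.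
      (\<lambda>n. ln (opnorm (cocycle_iter A x n)) / real n) \<longlonglongrightarrow> c)"

definition inv_cocycle :: "(nat \<Rightarrow> mat2) \<Rightarrow> nat \<Rightarrow> mat2" where
  "inv_cocycle A = (\<lambda>j. matrix_inv (A j))"

definition is_line :: "(real^2) set \<Rightarrow> bool" where
  "is_line l \<longleftrightarrow> subspace l \<and> dim l = 1"

definition inv_line :: "nat \<Rightarrow> (nat \<Rightarrow> mat2) \<Rightarrow> (real^2) set \<Rightarrow> bool" where
  "inv_line k A l \<longleftrightarrow> is_line l \<and> (\<forall>j\<in>{1..k}. (\<lambda>v. A j *v v) ` l \<subseteq> l)"

definition line_eig :: "mat2 \<Rightarrow> (real^2) set \<Rightarrow> real" where
  "line_eig M l = (SOME c. \<forall>v\<in>l. M *v v = c *s v)"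

definition lyap_line :: "nat \<Rightarrow> (nat \<Rightarrow> real) \<Rightarrow> (nat \<Rightarrow> mat2) \<Rightarrow> (real^2) set \<Rightarrow> real" where
  "lyap_line k p A l = (\<Sum>j=1..k. p j * ln \<bar>line_eig (A j) l\<bar>)"

definition quasi_irreducible :: "nat \<Rightarrow> (nat \<Rightarrow> real) \<Rightarrow> (nat \<Rightarrow> mat2) \<Rightarrow> bool" where
  "quasi_irreducible k p A \<longleftrightarrow>
     \<not> (\<exists>l. inv_line k A l \<and> lyap_line k p A l < lyap k p A)"

definition diagonalizable :: "nat \<Rightarrow> (nat \<Rightarrow> mat2) \<Rightarrow> bool" where
  "diagonalizable k A \<longleftrightarrow>
     (\<exists>l1 l2. inv_line k A l1 \<and> inv_line k A l2 \<and> l1 \<inter> l2 = {0})"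

end

theory Submission imports Defs begin


lemma lim_core:
  fixes S Nn :: "nat \<Rightarrow> real" and E B :: real
  assumes lim: "(\<lambda>n. S n / real n) \<longlonglongrightarrow> E" and E: "E \<ge> 0" and B: "B \<ge> 0"
    and S0: "S 0 = 0"
    and low: "\<And>n. exp (S n) \<le> Nn n"
    and up: "\<And>n. Nn n \<le> exp (S n) + exp (- S n) + B * (\<Sum>i<n. exp (S n - S (Suc i) - S i))"
  shows "(\<lambda>n. ln (Nn n) / real n) \<longlonglongrightarrow> E"
proof (rule LIMSEQ_I)
  fix r :: real assume r: "r > 0"
  define e where "e = r / 8"
  have e: "e > 0" using r by (simp add: e_def)
  obtain N0 where N0: "\<And>n. n \<ge> N0 \<Longrightarrow> norm (S n / real n - E) < e"
    using LIMSEQ_D[OF lim e] by blast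
  define N1 where "N1 = max N0 1"
  define C where "C = (\<Sum>i<N1. \<bar>S i - real i * E\<bar>)"
  have C0: "C \<ge> 0" unfolding C_def by (intro sum_nonneg) auto
  have SC: "\<bar>S i - real i * E\<bar> \<le> e * real i + C" for i
  proof (cases "i < N1")
    case True
    have "\<bar>S i - real i * E\<bar> \<le> C" unfolding C_def
      by (rule member_le_sum) (use True in auto)
    then show ?thesis using e by (simp add: add_increasing)
  next
    case False
    then have i: "i \<ge> N0" "i \<ge> 1" unfolding N1_def by auto
    then have "\<bar>S i / real i - E\<bar> < e" using N0 by auto
    moreover have "S i / real i - E = (S i - real i * E) / real i" using i by (simp add: field_simps)
    ultimately have "\<bar>S i - real i * E\<bar> < e * real i" using i by (simp add: abs_divide divide_less_eq)
    then show ?thesis using C0 by linarith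
  qed
  have lnlim: "(\<lambda>n. (ln (2 + B) + ln (real n) + 3 * C) / real n) \<longlonglongrightarrow> 0"
  proof -
    have "(\<lambda>n. (ln (2 + B) + 3 * C) / real n + ln (real n) / real n) \<longlonglongrightarrow> 0 + 0"
      by (intro tendsto_add lim_ln_over_n tendsto_divide_0[OF tendsto_const] filterlim_at_top_imp_at_infinity[OF filterlim_real_sequentially])
    then show ?thesis by (simp add: add_divide_distrib algebra_simps)
  qed
  obtain N2 where N2: "\<And>n. n \<ge> N2 \<Longrightarrow> norm ((ln (2 + B) + ln (real n) + 3 * C) / real n - 0) < e"
    using LIMSEQ_D[OF lnlim e] by blast
  have Clim: "(\<lambda>n. C / real n) \<longlonglongrightarrow> 0"
    by (intro tendsto_divide_0[OF tendsto_const] filterlim_at_top_imp_at_infinity[OF filterlim_real_sequentially])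
  obtain N3 where N3: "\<And>n. n \<ge> N3 \<Longrightarrow> norm (C / real n - 0) < e"
    using LIMSEQ_D[OF Clim e] by blast
  show "\<exists>no. \<forall>n\<ge>no. norm (ln (Nn n) / real n - E) < r"
  proof (intro exI allI impI)
    fix n assume n: "n \<ge> max (max N2 N3) 1"
    then have n1: "n \<ge> 1" and nN2: "n \<ge> N2" and nN3: "n \<ge> N3" by auto
    have rn: "real n \<ge> 1" using n1 by simp
    have Npos: "Nn n > 0" using low[of n] by (meson exp_gt_zero less_le_trans)
    have lowln: "S n \<le> ln (Nn n)" using low[of n] Npos by (simp add: ln_ge_iff)
    have Sl: "S n \<ge> real n * E - e * real n - C" using SC[of n] by linarith
    have "C / real n < e" using N3[OF nN3] C0 by simp
    then have "C < e * real n" using rn by (simp add: divide_less_eq)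
    then have lowb: "ln (Nn n) / real n > E - 2 * e"
      using lowln Sl rn by (simp add: less_divide_eq algebra_simps)
    define K where "K = real n * (E + 3 * e) + 3 * C"
    have t1: "exp (S n) \<le> exp K"
      using SC[of n] e E C0 rn unfolding K_def by (simp add: algebra_simps abs_le_iff)
    have t2: "exp (- S n) \<le> exp K"
    proof -
      have "- S n \<le> e * real n + C - real n * E" using SC[of n] by (simp add: abs_le_iff)
      also have "\<dots> \<le> K" unfolding K_def using e E C0 rn by (simp add: algebra_simps)
      finally show ?thesis by simp
    qed
    have t3: "(\<Sum>i<n. exp (S n - S (Suc i) - S i)) \<le> real n * exp K"
    proof -
      have "(\<Sum>i<n. exp (S n - S (Suc i) - S i)) \<le> (\<Sum>i<n. exp K)"
      proof (rule sum_mono)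
        fix i assume i: "i \<in> {..<n}"
        have a: "S n \<le> real n * E + e * real n + C" using SC[of n] by (simp add: abs_le_iff)
        have b: "- S (Suc i) \<le> e * real (Suc i) + C - real (Suc i) * E" using SC[of "Suc i"] by (simp add: abs_le_iff)
        have c: "- S i \<le> e * real i + C - real i * E" using SC[of i] by (simp add: abs_le_iff)
        have d: "real (Suc i) \<le> real n" "real i \<le> real n" using i by auto
        have "e * real (Suc i) \<le> e * real n" "e * real i \<le> e * real n"
          using d e by (auto intro: mult_left_mono)
        moreover have "real (Suc i) * E \<ge> 0" "real i * E \<ge> 0" using E by auto
        ultimately have "S n - S (Suc i) - S i \<le> K" using a b c unfolding K_def
          by (simp add: algebra_simps)
        then show "exp (S n - S (Suc i) - S i) \<le> exp K" by simp
      qed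
      then show ?thesis by simp
    qed
    have "Nn n \<le> exp K + exp K + B * (real n * exp K)"
      using up[of n] t1 t2 mult_left_mono[OF t3 B] by linarith
    also have "\<dots> = (2 + B * real n) * exp K" by (simp add: algebra_simps)
    also have "\<dots> \<le> ((2 + B) * real n) * exp K"
      using rn B by (intro mult_right_mono) (auto simp: algebra_simps)
    finally have Nup: "Nn n \<le> (2 + B) * real n * exp K" .
    have "ln (Nn n) \<le> ln ((2 + B) * real n * exp K)"
      using Nup Npos by simp
    also have "\<dots> = ln (2 + B) + ln (real n) + K"
      using B rn by (simp add: ln_mult)
    finally have lnup: "ln (Nn n) \<le> ln (2 + B) + ln (real n) + K" .
    have "(ln (2 + B) + ln (real n) + 3 * C) / real n < e"
      using N2[OF nN2] rn by (smt (verit, ccfv_SIG) divide_right_mono real_norm_def abs_ge_self diff_zero)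
    then have "ln (2 + B) + ln (real n) + 3 * C < e * real n"
      using rn by (simp add: divide_less_eq)
    then have "ln (Nn n) < real n * (E + 4 * e)" using lnup unfolding K_def by (simp add: algebra_simps)
    then have upb: "ln (Nn n) / real n < E + 4 * e" using rn by (simp add: divide_less_eq mult.commute)
    show "norm (ln (Nn n) / real n - E) < r"
      using lowb upb e unfolding e_def by (simp add: abs_less_iff)
  qed
qed



definition perp2 :: "real^2 \<Rightarrow> real^2" where
  "perp2 u = vector [- (u$2), u$1]"

lemma norm_eq_1_comp: "norm (u::real^2) = 1 \<longleftrightarrow> (u$1)^2 + (u$2)^2 = 1"
  by (simp add: norm_eq_1 inner_vec_def sum_2 power2_eq_square)

lemma inner2: "(x::real^2) \<bullet> y = x$1 * y$1 + x$2 * y$2"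
  by (simp add: inner_vec_def sum_2)

lemma od_aux:
  fixes a b x y :: real
  assumes "a^2 + b^2 = 1"
  shows "x = (x * a + y * b) * a - (y * a - x * b) * b"
    and "y = (x * a + y * b) * b + (y * a - x * b) * a"
  using assms by algebra+

lemma orth_decomp:
  assumes "norm (u::real^2) = 1"
  shows "v = (v \<bullet> u) *\<^sub>R u + (v \<bullet> perp2 u) *\<^sub>R perp2 u"
proof -
  have h: "(u$1)^2 + (u$2)^2 = 1" using assms norm_eq_1_comp by blast
  show ?thesis
    unfolding vec_eq_iff forall_2 perp2_def inner2
    using h by (simp add: od_aux)
qed

lemma norm_perp2: "norm (perp2 u) = norm u"
  by (simp add: norm_eq_sqrt_inner inner2 perp2_def)

lemma mat_perp:
  fixes M :: "real^2^2"
  assumes u: "norm u = 1" and Mu: "M *v u = a *\<^sub>R u"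
  shows "a * ((M *v perp2 u) \<bullet> perp2 u) = det M"
proof -
  have h: "(u$1)^2 + (u$2)^2 = 1" using u norm_eq_1_comp by blast
  have e1: "M$1$1 * u$1 + M$1$2 * u$2 = a * u$1" and e2: "M$2$1 * u$1 + M$2$2 * u$2 = a * u$2"
    using Mu by (simp_all add: vec_eq_iff forall_2 matrix_vector_mult_def sum_2)
  have "a * ((M *v perp2 u) \<bullet> perp2 u) = 
     a * ((M$1$1 * (- u$2) + M$1$2 * u$1) * (- u$2) + (M$2$1 * (- u$2) + M$2$2 * u$1) * u$1)"
    by (simp add: inner2 perp2_def matrix_vector_mult_def sum_2)
  also have "\<dots> = det M"
    unfolding det_2 using h e1 e2 by algebra
  finally show ?thesis .
qed

lemma iter_bound:
  fixes A :: "nat \<Rightarrow> real^2^2" and x :: "int \<Rightarrow> nat" and u :: "real^2"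
    and al be de :: "nat \<Rightarrow> real" and B :: real
  assumes u: "norm u = 1"
    and Au: "\<And>n. A (x (int n)) *v u = al n *\<^sub>R u"
    and Aw: "\<And>n. A (x (int n)) *v perp2 u = be n *\<^sub>R u + de n *\<^sub>R perp2 u"
    and ad: "\<And>n. \<bar>al n * de n\<bar> = 1"
    and bB: "\<And>n. \<bar>be n\<bar> \<le> B"
  defines "S \<equiv> \<lambda>n. \<Sum>i<n. ln \<bar>al i\<bar>"
  shows "exp (S n) \<le> opnorm (cocycle_iter A x n)"
    and "opnorm (cocycle_iter A x n) \<le> exp (S n) + exp (- S n) + B * (\<Sum>i<n. exp (S n - S (Suc i) - S i))"
proof -
  define w where "w = perp2 u"
  have w: "norm w = 1" using u norm_perp2 unfolding w_def by simp
  have Aw': "A (x (int n)) *v w = be n *\<^sub>R u + de n *\<^sub>R w" for n using Aw unfolding w_def .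
  have al0: "al i \<noteq> 0" for i using ad[of i] by auto
  have deal: "\<bar>de i\<bar> = 1 / \<bar>al i\<bar>" for i using ad[of i] al0[of i]
    by (simp add: abs_mult field_simps)
  have SSuc: "S (Suc n) = S n + ln \<bar>al n\<bar>" for n unfolding S_def by simp
  have B0: "B \<ge> 0" using bB[of 0] by linarith
  have Pu: "cocycle_iter A x n *v u = (\<Prod>i<n. al i) *\<^sub>R u" for n
  proof (induction n)
    case 0 then show ?case by simp
  next
    case (Suc n)
    have "cocycle_iter A x (Suc n) *v u = A (x (int n)) *v (cocycle_iter A x n *v u)"
      by (simp add: matrix_vector_mul_assoc)
    also have "\<dots> = (\<Prod>i<Suc n. al i) *\<^sub>R u" using Suc Au[of n]
      by (simp add: matrix_vector_mult_scaleR mult.commute)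
    finally show ?case .
  qed
  have absal: "\<bar>\<Prod>i<n. al i\<bar> = exp (S n)" for n
    unfolding S_def by (simp add: abs_prod exp_sum al0)
  have absde: "\<bar>\<Prod>i<n. de i\<bar> = exp (- S n)" for n
  proof -
    have "exp (- S n) = (\<Prod>i<n. exp (- ln \<bar>al i\<bar>))"
      unfolding S_def by (simp add: exp_sum[symmetric] sum_negf)
    also have "\<dots> = (\<Prod>i<n. \<bar>de i\<bar>)"
      by (intro prod.cong refl) (simp add: exp_minus al0 deal inverse_eq_divide)
    finally show ?thesis by (simp add: abs_prod)
  qed
  have Pw: "\<exists>\<beta>. cocycle_iter A x n *v w = \<beta> *\<^sub>R u + (\<Prod>i<n. de i) *\<^sub>R w
              \<and> \<bar>\<beta>\<bar> \<le> B * (\<Sum>i<n. exp (S n - S (Suc i) - S i))" for n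
  proof (induction n)
    case 0 then show ?case by simp
  next
    case (Suc n)
    then obtain \<beta> where b1: "cocycle_iter A x n *v w = \<beta> *\<^sub>R u + (\<Prod>i<n. de i) *\<^sub>R w"
      and b2: "\<bar>\<beta>\<bar> \<le> B * (\<Sum>i<n. exp (S n - S (Suc i) - S i))" by blast
    define D where "D = (\<Prod>i<n. de i)"
    have "cocycle_iter A x (Suc n) *v w = A (x (int n)) *v (cocycle_iter A x n *v w)"
      by (simp add: matrix_vector_mul_assoc)
    also have "\<dots> = (\<beta> * al n + D * be n) *\<^sub>R u + (D * de n) *\<^sub>R w"
      using Au[of n] Aw'[of n] unfolding b1 D_def[symmetric]
      by (simp add: matrix_vector_right_distrib matrix_vector_mult_scaleR algebra_simps scaleR_add_right)
    also have "D * de n = (\<Prod>i<Suc n. de i)" unfolding D_def by (simp add: mult.commute)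
    finally have e1: "cocycle_iter A x (Suc n) *v w = (\<beta> * al n + D * be n) *\<^sub>R u + (\<Prod>i<Suc n. de i) *\<^sub>R w" .
    have "\<bar>\<beta> * al n + D * be n\<bar> \<le> \<bar>\<beta>\<bar> * \<bar>al n\<bar> + \<bar>D\<bar> * B"
    proof -
      have "\<bar>D * be n\<bar> \<le> \<bar>D\<bar> * B" using bB[of n] by (simp add: abs_mult mult_left_mono)
      then show ?thesis using abs_triangle_ineq[of "\<beta> * al n" "D * be n"] by (simp add: abs_mult)
    qed
    also have "\<dots> \<le> B * (\<Sum>i<n. exp (S n - S (Suc i) - S i)) * \<bar>al n\<bar> + exp (- S n) * B"
      using b2 absde[of n] unfolding D_def by (simp add: mult_right_mono)
    also have "\<dots> = B * (\<Sum>i<Suc n. exp (S (Suc n) - S (Suc i) - S i))"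
    proof -
      have "(\<Sum>i<n. exp (S n - S (Suc i) - S i)) * \<bar>al n\<bar> = (\<Sum>i<n. exp (S (Suc n) - S (Suc i) - S i))"
        unfolding sum_distrib_right SSuc by (intro sum.cong refl) (simp add: exp_add exp_diff al0)
      then show ?thesis by (simp add: algebra_simps)
    qed
    finally show ?case using e1 by blast
  qed
  obtain \<beta> where b1: "cocycle_iter A x n *v w = \<beta> *\<^sub>R u + (\<Prod>i<n. de i) *\<^sub>R w"
      and b2: "\<bar>\<beta>\<bar> \<le> B * (\<Sum>i<n. exp (S n - S (Suc i) - S i))" using Pw by blast
  have bl: "bounded_linear (\<lambda>v. cocycle_iter A x n *v v)" by simp
  have "norm (cocycle_iter A x n *v u) \<le> opnorm (cocycle_iter A x n) * norm u"
    unfolding opnorm_def by (rule onorm[OF bl])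
  then show "exp (S n) \<le> opnorm (cocycle_iter A x n)"
    using u by (simp add: Pu absal)
  show "opnorm (cocycle_iter A x n) \<le> exp (S n) + exp (- S n) + B * (\<Sum>i<n. exp (S n - S (Suc i) - S i))"
    unfolding opnorm_def
  proof (rule onorm_le)
    fix v :: "real^2"
    have dec: "v = (v \<bullet> u) *\<^sub>R u + (v \<bullet> w) *\<^sub>R w" using orth_decomp[OF u] unfolding w_def .
    have cu: "\<bar>v \<bullet> u\<bar> \<le> norm v" using Cauchy_Schwarz_ineq2[of v u] u by simp
    have cw: "\<bar>v \<bullet> w\<bar> \<le> norm v" using Cauchy_Schwarz_ineq2[of v w] w by simp
    have "cocycle_iter A x n *v v = (v \<bullet> u) *\<^sub>R (cocycle_iter A x n *v u) + (v \<bullet> w) *\<^sub>R (cocycle_iter A x n *v w)"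
      by (subst dec) (simp add: matrix_vector_right_distrib matrix_vector_mult_scaleR)
    also have "\<dots> = ((v \<bullet> u) * (\<Prod>i<n. al i) + (v \<bullet> w) * \<beta>) *\<^sub>R u + ((v \<bullet> w) * (\<Prod>i<n. de i)) *\<^sub>R w"
      by (simp add: Pu b1 algebra_simps scaleR_add_right)
    finally have eq: "cocycle_iter A x n *v v = \<dots>" .
    have "norm (cocycle_iter A x n *v v) \<le> \<bar>(v \<bullet> u) * (\<Prod>i<n. al i) + (v \<bullet> w) * \<beta>\<bar> + \<bar>(v \<bullet> w) * (\<Prod>i<n. de i)\<bar>"
      unfolding eq using norm_triangle_ineq[of "((v \<bullet> u) * (\<Prod>i<n. al i) + (v \<bullet> w) * \<beta>) *\<^sub>R u" "((v \<bullet> w) * (\<Prod>i<n. de i)) *\<^sub>R w"] u w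
      by simp
    also have "\<dots> \<le> \<bar>v \<bullet> u\<bar> * exp (S n) + \<bar>v \<bullet> w\<bar> * \<bar>\<beta>\<bar> + \<bar>v \<bullet> w\<bar> * exp (- S n)"
    proof -
      have "\<bar>(v \<bullet> u) * (\<Prod>i<n. al i) + (v \<bullet> w) * \<beta>\<bar> \<le> \<bar>(v \<bullet> u) * (\<Prod>i<n. al i)\<bar> + \<bar>(v \<bullet> w) * \<beta>\<bar>"
        by (rule abs_triangle_ineq)
      moreover have "\<bar>(v \<bullet> u) * (\<Prod>i<n. al i)\<bar> = \<bar>v \<bullet> u\<bar> * exp (S n)"
        by (simp only: abs_mult absal)
      moreover have "\<bar>(v \<bullet> w) * (\<Prod>i<n. de i)\<bar> = \<bar>v \<bullet> w\<bar> * exp (- S n)"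
        by (simp only: abs_mult absde)
      moreover have "\<bar>(v \<bullet> w) * \<beta>\<bar> = \<bar>v \<bullet> w\<bar> * \<bar>\<beta>\<bar>" by (simp only: abs_mult)
      ultimately show ?thesis by linarith
    qed
    also have "\<dots> \<le> norm v * exp (S n) + norm v * (B * (\<Sum>i<n. exp (S n - S (Suc i) - S i))) + norm v * exp (- S n)"
      using cu cw b2 by (intro add_mono mult_mono) auto
    finally show "norm (cocycle_iter A x n *v v) \<le> (exp (S n) + exp (- S n) + B * (\<Sum>i<n. exp (S n - S (Suc i) - S i))) * norm v"
      by (simp add: algebra_simps)
  qed
qed



lemma pmf_letter:
  assumes "prob_vec k p"
  shows "pmf (letter_pmf k p) j = (if j \<in> {1..k} then p j else 0)"
proof -
  let ?g = "\<lambda>j. if j \<in> {1..k} then p j else 0"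
  have nn: "\<And>j. 0 \<le> ?g j" using assms unfolding prob_vec_def by (auto intro: less_imp_le)
  have "(\<integral>\<^sup>+x. ennreal (?g x) \<partial>count_space UNIV) = (\<Sum>x\<in>{1..k}. ennreal (?g x))"
    by (rule nn_integral_count_space') auto
  also have "\<dots> = ennreal (\<Sum>x\<in>{1..k}. ?g x)"
    by (rule sum_ennreal) (use nn in blast)
  also have "(\<Sum>x\<in>{1..k}. ?g x) = 1" using assms unfolding prob_vec_def by simp
  finally have "(\<integral>\<^sup>+x. ennreal (?g x) \<partial>count_space UNIV) = 1" by simp
  then show ?thesis unfolding letter_pmf_def
    by (subst pmf_embed_pmf) (use nn in auto)
qed

lemma set_letter:
  assumes "prob_vec k p"
  shows "set_pmf (letter_pmf k p) = {1..k}"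
  using assms unfolding set_pmf_eq pmf_letter[OF assms] prob_vec_def
  by (auto simp: less_le)

lemma expect_letter:
  assumes "prob_vec k p"
  shows "measure_pmf.expectation (letter_pmf k p) f = (\<Sum>j=1..k. p j * f j)"
  by (subst integral_measure_pmf_real[where A="{1..k}"]) 
     (auto simp: set_letter[OF assms] pmf_letter[OF assms] mult.commute)

lemma THE_AE_lim:
  assumes "prob_space M" and "AE x in M. (\<lambda>n. f x n) \<longlonglongrightarrow> (c::real)"
  shows "(THE c. AE x in M. (\<lambda>n. f x n) \<longlonglongrightarrow> c) = c"
proof (rule the_equality)
  show "AE x in M. (\<lambda>n. f x n) \<longlonglongrightarrow> c" by fact
  fix c' assume "AE x in M. (\<lambda>n. f x n) \<longlonglongrightarrow> c'"
  with assms(2) have "AE x in M. c' = c" by eventually_elim (rule LIMSEQ_unique)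
  then have "AE x in M. c' = c" .
  show "c' = c"
  proof (rule ccontr)
    assume "c' \<noteq> c"
    with \<open>AE x in M. c' = c\<close> have "AE x in M. False" by simp
    then show False using prob_space.AE_False[OF assms(1)] by simp
  qed
qed

lemma pps: "product_prob_space (\<lambda>_. measure_pmf q)"
  by (simp add: product_prob_space_def product_prob_space_axioms_def product_sigma_finite_def
      prob_space_measure_pmf prob_space_imp_sigma_finite)

lemma indep_coords:
  fixes q :: "'a pmf" and f :: "'a \<Rightarrow> real"
  assumes J: "finite J" "J \<noteq> {}"
  shows "prob_space.indep_vars (PiM (UNIV::int set) (\<lambda>_. measure_pmf q)) (\<lambda>_. borel) (\<lambda>i x. f (x i)) J"
proof -
  interpret P: product_prob_space "\<lambda>_::int. measure_pmf q" UNIV by (rule pps)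
  have rv: "\<And>i. i \<in> J \<Longrightarrow> (\<lambda>x. x i) \<in> measurable (PiM (UNIV::int set) (\<lambda>_. measure_pmf q)) (measure_pmf q)"
    by (rule measurable_component_singleton) simp
  have "P.indep_vars (\<lambda>_. measure_pmf q) (\<lambda>i x. x i) J"
  proof (subst P.indep_vars_iff_distr_eq_PiM'[OF J(2) rv])
    show "distr (PiM UNIV (\<lambda>_. measure_pmf q)) (PiM J (\<lambda>_. measure_pmf q)) (\<lambda>x. \<lambda>i\<in>J. x i) =
          PiM J (\<lambda>i. distr (PiM UNIV (\<lambda>_. measure_pmf q)) (measure_pmf q) (\<lambda>x. x i))"
    proof -
      have "PiM J (\<lambda>i. distr (PiM UNIV (\<lambda>_. measure_pmf q)) (measure_pmf q) (\<lambda>x. x i)) = PiM J (\<lambda>_. measure_pmf q)"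
        by (intro PiM_cong refl) (simp add: P.PiM_component)
      moreover have "distr (PiM UNIV (\<lambda>_. measure_pmf q)) (PiM J (\<lambda>_. measure_pmf q)) (\<lambda>x. \<lambda>i\<in>J. x i) = PiM J (\<lambda>_. measure_pmf q)"
        using P.distr_PiM_restrict_finite[OF J(1)] by simp
      ultimately show ?thesis by simp
    qed
  qed simp
  then show ?thesis
    by (rule P.indep_vars_compose2[where Y="\<lambda>_. f"]) simp
qed


lemma hoeff_step:
  fixes q :: "'a pmf" and f :: "'a \<Rightarrow> real" and K e :: real and n :: nat
  assumes fK: "\<And>j. \<bar>f j\<bar> \<le> K" and e: "e \<ge> 0" and n: "n \<ge> 1"
  shows "measure (PiM (UNIV::int set) (\<lambda>_. measure_pmf q))
           {x \<in> space (PiM (UNIV::int set) (\<lambda>_. measure_pmf q)).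
              e \<le> \<bar>(\<Sum>i<n. f (x (int i))) / real n - measure_pmf.expectation q f\<bar>}
         \<le> 2 * exp (- 2 * real n * e\<^sup>2 / (2 * K + 2)\<^sup>2)"
proof -
  define M where "M = PiM (UNIV::int set) (\<lambda>_. measure_pmf q)"
  interpret P: product_prob_space "\<lambda>_::int. measure_pmf q" UNIV by (rule pps)
  define I where "I = int ` {..<n}"
  have finI: "finite I" unfolding I_def by auto
  have neI: "I \<noteq> {}" using n unfolding I_def by (auto simp: lessThan_empty_iff)
  have cardI: "card I = n" unfolding I_def by (simp add: card_image)
  have K0: "K \<ge> 0" using fK[of undefined] by linarith
  have distr0: "distr M borel (\<lambda>x. f (x i)) = distr (measure_pmf q) borel f" for i
  proof -
    have "distr M borel (\<lambda>x. f (x i)) = distr (distr M (measure_pmf q) (\<lambda>x. x i)) borel f"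
      unfolding M_def by (subst distr_distr) (auto simp: comp_def)
    also have "distr M (measure_pmf q) (\<lambda>x. x i) = measure_pmf q"
      unfolding M_def by (rule P.PiM_component) simp
    finally show ?thesis .
  qed
  interpret MP: prob_space M unfolding M_def by (rule prob_space_PiM) (simp add: prob_space_measure_pmf)
  interpret H: Hoeffding_ineq_iid M I "\<lambda>i x. f (x i)" "\<lambda>x. f (x 0)" "- K - 1" "K + 1" "integral\<^sup>L M (\<lambda>x. f (x 0))"
  proof unfold_locales
    show "finite I" by fact
    show "prob_space.indep_vars M (\<lambda>_. borel) (\<lambda>i x. f (x i)) I"
      unfolding M_def by (rule indep_coords[OF finI neI])
    show "distr M borel (\<lambda>x. f (x i)) = distr M borel (\<lambda>x. f (x 0))" if "i \<in> I" for i
      by (simp add: distr0)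
    show "(\<lambda>x. f (x 0)) \<in> borel_measurable M"
      unfolding M_def by (intro measurable_compose[OF measurable_component_singleton]) auto
    show "AE x in M. f (x 0) \<in> {- K - 1..K + 1}"
    proof (intro AE_I2)
      fix x show "f (x 0) \<in> {- K - 1..K + 1}" using fK[of "x 0"] by (auto simp: abs_le_iff)
    qed
  qed (rule reflexive)
  have mu: "integral\<^sup>L M (\<lambda>x. f (x 0)) = measure_pmf.expectation q f"
  proof -
    have "measure_pmf.expectation q f = integral\<^sup>L (distr M (measure_pmf q) (\<lambda>x. x 0)) f"
      unfolding M_def by (subst P.PiM_component) auto
    also have "\<dots> = integral\<^sup>L M (\<lambda>x. f (x 0))"
      unfolding M_def by (subst integral_distr) auto
    finally show ?thesis by simp
  qed
  have sumI: "(\<Sum>i\<in>I. f (x i)) = (\<Sum>i<n. f (x (int i)))" for x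
    unfolding I_def by (subst sum.reindex) auto
  have "measure M {x \<in> space M. \<bar>(\<Sum>i\<in>I. f (x i)) / real (card I) - integral\<^sup>L M (\<lambda>x. f (x 0))\<bar> \<ge> e}
        \<le> 2 * exp (- 2 * real (card I) * e\<^sup>2 / ((K + 1) - (- K - 1))\<^sup>2)"
    using H.Hoeffding_ineq_abs_ge'[OF e _ neI] K0 by simp
  then show ?thesis unfolding M_def[symmetric] cardI sumI mu
    by (simp add: algebra_simps)
qed


lemma slln:
  fixes q :: "'a pmf" and f :: "'a \<Rightarrow> real" and K :: real
  assumes fK: "\<And>j. \<bar>f j\<bar> \<le> K"
  shows "AE x in PiM (UNIV::int set) (\<lambda>_. measure_pmf q).
           (\<lambda>n. (\<Sum>i<n. f (x (int i))) / real n) \<longlonglongrightarrow> measure_pmf.expectation q f"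
proof -
  define M where "M = PiM (UNIV::int set) (\<lambda>_. measure_pmf q)"
  interpret MP: prob_space M unfolding M_def by (rule prob_space_PiM) (simp add: prob_space_measure_pmf)
  define \<mu> where "\<mu> = measure_pmf.expectation q f"
  define avg where "avg x n = (\<Sum>i<n. f (x (int i))) / real n" for x :: "int \<Rightarrow> 'a" and n
  define ee where "ee m = inverse (real (Suc m))" for m :: nat
  define A where "A m n = {x \<in> space M. ee m \<le> \<bar>avg x (Suc n) - \<mu>\<bar>}" for m n
  have K0: "K \<ge> 0" using fK[of undefined] by linarith
  have meas: "A m n \<in> sets M" for m n
  proof -
    have mf: "(\<lambda>x. f (x i)) \<in> borel_measurable M" for i
      unfolding M_def by (intro measurable_compose[OF measurable_component_singleton]) auto
    have "(\<lambda>x. \<bar>avg x (Suc n) - \<mu>\<bar>) \<in> borel_measurable M"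
      unfolding avg_def by (intro borel_measurable_abs borel_measurable_diff borel_measurable_divide borel_measurable_sum mf borel_measurable_const)
    from measurable_sets[OF this, of "{ee m..}"] show ?thesis
      unfolding A_def by (simp add: vimage_def Int_def conj_commute)
  qed
  have AE_m: "AE x in M. eventually (\<lambda>n. x \<in> space M - A m n) sequentially" for m
  proof (rule borel_cantelli_AE1)
    show "A m n \<in> sets M" for n by (rule meas)
    show "emeasure M (A m n) < \<infinity>" for n by (simp add: MP.emeasure_eq_measure)
    define D where "D = (2 * K + 2)\<^sup>2"
    have D: "D > 0" unfolding D_def using K0 by simp
    define c where "c = 2 * (ee m)\<^sup>2 / D"
    have c: "c > 0" unfolding c_def ee_def using D by simp
    have bnd: "measure M (A m n) \<le> 2 * exp (- c) * exp (- c) ^ n" for n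
    proof -
      have "measure M (A m n) \<le> 2 * exp (- 2 * real (Suc n) * (ee m)\<^sup>2 / (2 * K + 2)\<^sup>2)"
        unfolding A_def avg_def M_def \<mu>_def
        by (rule hoeff_step[OF fK]) (auto simp: ee_def)
      also have "- 2 * real (Suc n) * (ee m)\<^sup>2 / (2 * K + 2)\<^sup>2 = real (Suc n) * (- c)"
        unfolding c_def D_def[symmetric] using D by (simp add: field_simps)
      also have "exp (real (Suc n) * (- c)) = exp (- c) * exp (- c) ^ n"
        by (subst exp_of_nat_mult) simp
      finally show ?thesis by simp
    qed
    have "summable (\<lambda>n. 2 * exp (- c) * exp (- c) ^ n)"
      using c by (intro summable_mult summable_geometric) simp
    then show "summable (\<lambda>n. measure M (A m n))"
      by (rule summable_comparison_test') (use bnd in simp)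
  qed
  have "AE x in M. \<forall>m. eventually (\<lambda>n. x \<in> space M - A m n) sequentially"
    using AE_m by (simp add: AE_all_countable)
  then have "AE x in M. avg x \<longlonglongrightarrow> \<mu>"
  proof (eventually_elim)
    case (elim x)
    show "avg x \<longlonglongrightarrow> \<mu>"
    proof (rule tendstoI)
      fix r :: real assume r: "r > 0"
      obtain m0 :: nat where m0: "m0 > 0" "inverse (real m0) < r" using ex_inverse_of_nat_less[OF r] by blast
      define m where "m = m0 - 1"
      have "Suc m = m0" using m0 unfolding m_def by simp
      then have m: "inverse (real (Suc m)) < r" using m0 by simp
      have "eventually (\<lambda>n. x \<in> space M - A m n) sequentially" using elim by blast
      then have "eventually (\<lambda>n. dist (avg x (Suc n)) \<mu> < r) sequentially"
      proof (rule eventually_mono)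
        fix n assume "x \<in> space M - A m n"
        then have "\<bar>avg x (Suc n) - \<mu>\<bar> < ee m" unfolding A_def by auto
        then show "dist (avg x (Suc n)) \<mu> < r" using m unfolding ee_def dist_real_def by simp
      qed
      then show "eventually (\<lambda>n. dist (avg x n) \<mu> < r) sequentially"
        by (rule eventually_sequentially_Suc[THEN iffD1])
    qed
  qed
  then show ?thesis unfolding M_def avg_def \<mu>_def .
qed



lemma span_scale_eq:
  fixes u :: "real^2"
  assumes "k \<noteq> 0"
  shows "span {k *\<^sub>R u} = span {u}"
proof -
  have "range (\<lambda>t. t *\<^sub>R (k *\<^sub>R u)) = range (\<lambda>t. t *\<^sub>R u)"
  proof (intro equalityI subsetI)
    fix v assume "v \<in> range (\<lambda>t. t *\<^sub>R (k *\<^sub>R u))"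
    then obtain t where "v = t *\<^sub>R (k *\<^sub>R u)" by blast
    then show "v \<in> range (\<lambda>t. t *\<^sub>R u)" by (intro range_eqI[of _ _ "t * k"]) simp
  next
    fix v assume "v \<in> range (\<lambda>t. t *\<^sub>R u)"
    then obtain t where "v = t *\<^sub>R u" by blast
    then show "v \<in> range (\<lambda>t. t *\<^sub>R (k *\<^sub>R u))" using assms by (intro range_eqI[of _ _ "t / k"]) simp
  qed
  then show ?thesis by (simp add: span_singleton)
qed

lemma line_unit:
  assumes "is_line l"
  obtains u :: "real^2" where "norm u = 1" "l = span {u}"
proof -
  have sub: "subspace l" and d: "dim l = 1" using assms unfolding is_line_def by auto
  obtain B where B: "B \<subseteq> l" "independent B" "l \<subseteq> span B" "card B = dim l"
    by (rule basis_exists)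
  then obtain v where v: "B = {v}" using d by (auto simp: card_1_singleton_iff)
  have v0: "v \<noteq> 0" using B(2) v by (auto simp: dependent_single)
  have "span B \<subseteq> l" using B(1) sub by (rule span_minimal)
  then have lv: "l = span {v}" using B(3) v by auto
  define u where "u = (1 / norm v) *\<^sub>R v"
  have "norm u = 1" unfolding u_def using v0 by simp
  moreover have "l = span {u}" unfolding u_def lv using v0 by (subst span_scale_eq) auto
  ultimately show ?thesis by (rule that)
qed

lemma line_eigvec:
  fixes M :: "real^2^2"
  assumes "l = span {u}" "(\<lambda>v. M *v v) ` l \<subseteq> l"
  shows "\<exists>a. M *v u = a *\<^sub>R u"
proof -
  have "u \<in> l" using assms(1) by (simp add: span_base)
  then have "M *v u \<in> l" using assms(2) by blast
  then show ?thesis using assms(1) by (auto simp: span_singleton)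
qed

lemma line_eig_val:
  fixes M :: "real^2^2"
  assumes l: "l = span {u}" and u: "u \<noteq> 0" and Mu: "M *v u = a *\<^sub>R u"
  shows "line_eig M l = a"
proof -
  have P: "\<forall>v\<in>l. M *v v = a *s v"
  proof
    fix v assume "v \<in> l"
    then obtain t where "v = t *\<^sub>R u" using l by (auto simp: span_singleton)
    then show "M *v v = a *s v" using Mu by (simp add: matrix_vector_mult_scaleR scalar_mult_eq_scaleR)
  qed
  then have "\<forall>v\<in>l. M *v v = line_eig M l *s v" unfolding line_eig_def by (rule someI)
  moreover have "u \<in> l" using l by (simp add: span_base)
  ultimately have "M *v u = line_eig M l *s u" by blast
  then have "a *\<^sub>R u = line_eig M l *\<^sub>R u" by (metis Mu scalar_mult_eq_scaleR)
  then show ?thesis using u by (metis scaleR_cancel_right)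
qed

lemma inv_eig:
  fixes M N :: "real^2^2"
  assumes NM: "N ** M = mat 1" and Mu: "M *v u = a *\<^sub>R u" and u: "u \<noteq> 0"
  shows "a \<noteq> 0" "N *v u = inverse a *\<^sub>R u"
proof -
  have "u = N *v (M *v u)" by (simp add: matrix_vector_mul_assoc NM)
  also have "\<dots> = a *\<^sub>R (N *v u)" by (simp add: Mu matrix_vector_mult_scaleR)
  finally have e: "u = a *\<^sub>R (N *v u)" .
  then show a0: "a \<noteq> 0" using u by auto
  from e have "inverse a *\<^sub>R u = N *v u" using a0 by (metis scaleR_scaleR left_inverse scaleR_one)
  then show "N *v u = inverse a *\<^sub>R u" by simp
qed

lemma minv:
  fixes M :: "real^2^2"
  assumes "det M \<noteq> 0"
  shows "matrix_inv M ** M = mat 1" "M ** matrix_inv M = mat 1"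
proof -
  have "invertible M" using assms by (simp add: invertible_det_nz)
  then have "\<exists>A'. M ** A' = mat 1 \<and> A' ** M = mat 1" unfolding invertible_def .
  then have "M ** matrix_inv M = mat 1 \<and> matrix_inv M ** M = mat 1"
    unfolding matrix_inv_def by (rule someI_ex)
  then show "matrix_inv M ** M = mat 1" "M ** matrix_inv M = mat 1" by auto
qed

lemma det_minv:
  fixes M :: "real^2^2"
  assumes "SL2pm M"
  shows "SL2pm (matrix_inv M)"
proof -
  have d: "det M \<noteq> 0" using assms unfolding SL2pm_def by auto
  have "det (matrix_inv M) * det M = 1"
    using minv(1)[OF d] by (metis det_mul det_I)
  then show ?thesis using assms unfolding SL2pm_def by (auto simp: algebra_simps)
qed

lemma line_transversal:
  fixes u u' :: "real^2"
  assumes u: "u \<noteq> 0" and u': "u' \<noteq> 0" and ne: "span {u} \<noteq> span {u'}"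
  shows "span {u} \<inter> span {u'} = {0}"
proof (rule ccontr)
  assume "span {u} \<inter> span {u'} \<noteq> {0}"
  moreover have "0 \<in> span {u} \<inter> span {u'}" by (simp add: span_zero)
  ultimately obtain v where v: "v \<in> span {u}" "v \<in> span {u'}" "v \<noteq> 0" by blast
  obtain t where t: "v = t *\<^sub>R u" using v(1) by (auto simp: span_singleton)
  obtain t' where t': "v = t' *\<^sub>R u'" using v(2) by (auto simp: span_singleton)
  have "t \<noteq> 0" "t' \<noteq> 0" using t t' v(3) by auto
  then have "span {v} = span {u}" "span {v} = span {u'}" using t t' span_scale_eq by metis+
  then show False using ne by simp
qed


lemma span_image:
  fixes M :: "real^2^2"
  assumes "l = span {u}" "M *v u = c *\<^sub>R u"
  shows "(\<lambda>v. M *v v) ` l \<subseteq> l"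
proof
  fix y assume "y \<in> (\<lambda>v. M *v v) ` l"
  then obtain v where v: "v \<in> l" "y = M *v v" by blast
  then obtain t where "v = t *\<^sub>R u" using assms(1) by (auto simp: span_singleton)
  then have "y = (t * c) *\<^sub>R u" using v assms(2) by (simp add: matrix_vector_mult_scaleR)
  then show "y \<in> l" using assms(1) by (auto simp: span_singleton)
qed

lemma key:
  fixes k :: nat and p :: "nat \<Rightarrow> real" and A :: "nat \<Rightarrow> real^2^2" and l
  assumes pv: "prob_vec k p" and sl: "\<forall>j\<in>{1..k}. SL2pm (A j)"
    and il: "inv_line k A l" and E0: "lyap_line k p A l \<ge> 0"
  shows "lyap k p A = lyap_line k p A l"
proof -
  obtain u where u: "norm u = 1" "l = span {u}"
    using il line_unit unfolding inv_line_def by blast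
  have u0: "u \<noteq> 0" using u by auto
  define a where "a j = line_eig (A j) l" for j
  have Au: "A j *v u = a j *\<^sub>R u" if j: "j \<in> {1..k}" for j
  proof -
    obtain c where c: "A j *v u = c *\<^sub>R u"
      using line_eigvec[OF u(2)] il j unfolding inv_line_def by blast
    then have "line_eig (A j) l = c" using line_eig_val[OF u(2) u0] by blast
    then show ?thesis using c unfolding a_def by simp
  qed
  define w where "w = perp2 u"
  define b where "b j = (A j *v w) \<bullet> u" for j
  define d where "d j = (A j *v w) \<bullet> perp2 u" for j
  have Aw: "A j *v perp2 u = b j *\<^sub>R u + d j *\<^sub>R perp2 u" for j
    unfolding b_def d_def w_def by (rule orth_decomp[OF u(1)])
  have ad: "\<bar>a j * d j\<bar> = 1" if j: "j \<in> {1..k}" for j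
  proof -
    have "a j * d j = det (A j)" unfolding d_def w_def by (rule mat_perp[OF u(1) Au[OF j]])
    moreover have "SL2pm (A j)" using sl j by blast
    ultimately show ?thesis unfolding SL2pm_def by auto
  qed
  define B where "B = (\<Sum>j\<in>{1..k}. \<bar>b j\<bar>)"
  have bB: "\<bar>b j\<bar> \<le> B" if "j \<in> {1..k}" for j
    unfolding B_def by (rule member_le_sum) (use that in auto)
  have B0: "B \<ge> 0" unfolding B_def by (simp add: sum_nonneg)
  define f where "f j = (if j \<in> {1..k} then ln \<bar>a j\<bar> else 0)" for j
  define KK where "KK = (\<Sum>j\<in>{1..k}. \<bar>ln \<bar>a j\<bar>\<bar>)"
  have fK: "\<bar>f j\<bar> \<le> KK" for j
  proof (cases "j \<in> {1..k}")
    case True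
    then show ?thesis unfolding f_def KK_def by (simp, intro member_le_sum) auto
  next
    case False
    then have "f j = 0" unfolding f_def by auto
    moreover have "KK \<ge> 0" unfolding KK_def by (rule sum_nonneg) auto
    ultimately show ?thesis by simp
  qed
  define E where "E = lyap_line k p A l"
  have expE: "measure_pmf.expectation (letter_pmf k p) f = E"
    unfolding expect_letter[OF pv] E_def lyap_line_def a_def f_def by (intro sum.cong) auto
  let ?M = "bernoulli_shift_measure k p"
  have Mdef: "?M = PiM (UNIV::int set) (\<lambda>_. measure_pmf (letter_pmf k p))"
    unfolding bernoulli_shift_measure_def ..
  have psM: "prob_space ?M" unfolding Mdef by (rule prob_space_PiM) (simp add: prob_space_measure_pmf)
  have AE1: "AE x in ?M. \<forall>i::int. x i \<in> {1..k}"
    unfolding AE_all_countable Mdef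
  proof
    fix i :: int
    show "AE x in PiM UNIV (\<lambda>_. measure_pmf (letter_pmf k p)). x i \<in> {1..k}"
      by (rule AE_PiM_component) (auto simp: prob_space_measure_pmf AE_measure_pmf_iff set_letter[OF pv])
  qed
  have AE2: "AE x in ?M. (\<lambda>n. (\<Sum>i<n. f (x (int i))) / real n) \<longlonglongrightarrow> E"
    using slln[where q="letter_pmf k p" and f=f and K=KK, OF fK] unfolding Mdef expE .
  have "AE x in ?M. (\<lambda>n. ln (opnorm (cocycle_iter A x n)) / real n) \<longlonglongrightarrow> E"
    using AE1 AE2
  proof eventually_elim
    case (elim x)
    define S where "S = (\<lambda>n. \<Sum>i<n. ln \<bar>a (x (int i))\<bar>)"
    have xin: "x (int n) \<in> {1..k}" for n using elim(1) by blast
    have Sf: "S n = (\<Sum>i<n. f (x (int i)))" for n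
      unfolding S_def f_def using xin by (intro sum.cong) auto
    note ib = iter_bound[where A=A and x=x and u=u and al="\<lambda>n. a (x (int n))"
        and be="\<lambda>n. b (x (int n))" and de="\<lambda>n. d (x (int n))" and B=B,
        OF u(1) Au[OF xin] Aw ad[OF xin] bB[OF xin]]
    show ?case
    proof (rule lim_core[where S=S and B=B])
      show "(\<lambda>n. S n / real n) \<longlonglongrightarrow> E" using elim(2) unfolding Sf .
      show "E \<ge> 0" using E0 unfolding E_def .
      show "B \<ge> 0" by (rule B0)
      show "S 0 = 0" unfolding S_def by simp
      show "exp (S n) \<le> opnorm (cocycle_iter A x n)" for n
        using ib(1)[of n] unfolding S_def .
      show "opnorm (cocycle_iter A x n) \<le> exp (S n) + exp (- S n) + B * (\<Sum>i<n. exp (S n - S (Suc i) - S i))" for n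
        using ib(2)[of n] unfolding S_def .
    qed
  qed
  then have "(THE c. AE x in ?M. (\<lambda>n. ln (opnorm (cocycle_iter A x n)) / real n) \<longlonglongrightarrow> c) = E"
    by (rule THE_AE_lim[OF psM])
  then show ?thesis unfolding lyap_def E_def .
qed

lemma inv_line_transfer:
  fixes M N :: "nat \<Rightarrow> real^2^2"
  assumes il: "inv_line k M l" and NM: "\<forall>j\<in>{1..k}. N j ** M j = mat 1"
  obtains u where "norm u = 1" "l = span {u}" "inv_line k N l"
    "\<forall>j\<in>{1..k}. M j *v u = line_eig (M j) l *\<^sub>R u"
    "\<forall>j\<in>{1..k}. line_eig (M j) l \<noteq> 0"
    "\<forall>j\<in>{1..k}. line_eig (N j) l = inverse (line_eig (M j) l)"
proof -
  obtain u where u: "norm u = 1" "l = span {u}"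
    using il line_unit unfolding inv_line_def by blast
  have u0: "u \<noteq> 0" using u by auto
  have Mu: "M j *v u = line_eig (M j) l *\<^sub>R u" if j: "j \<in> {1..k}" for j
  proof -
    obtain c where c: "M j *v u = c *\<^sub>R u"
      using line_eigvec[OF u(2)] il j unfolding inv_line_def by blast
    then have "line_eig (M j) l = c" using line_eig_val[OF u(2) u0] by blast
    then show ?thesis using c by simp
  qed
  have nz: "line_eig (M j) l \<noteq> 0" and Nu: "N j *v u = inverse (line_eig (M j) l) *\<^sub>R u"
    if j: "j \<in> {1..k}" for j
  proof -
    have "N j ** M j = mat 1" using NM j by blast
    from inv_eig[OF this Mu[OF j] u0] show "line_eig (M j) l \<noteq> 0" "N j *v u = inverse (line_eig (M j) l) *\<^sub>R u" by auto
  qed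
  have "inv_line k N l"
    unfolding inv_line_def using il span_image[OF u(2) Nu] unfolding inv_line_def by blast
  moreover have "\<forall>j\<in>{1..k}. line_eig (N j) l = inverse (line_eig (M j) l)"
    using line_eig_val[OF u(2) u0 Nu] by blast
  ultimately show ?thesis using that u Mu nz by blast
qed

theorem lemma2p5:
  fixes k :: nat and p :: "nat \<Rightarrow> real" and A :: "nat \<Rightarrow> real^2^2"
  assumes "prob_vec k p"
    and "\<forall>j\<in>{1..k}. SL2pm (A j)"
  shows "diagonalizable k A \<or> quasi_irreducible k p A
         \<or> quasi_irreducible k p (inv_cocycle A)"
proof (rule ccontr)
  assume H: "\<not> (diagonalizable k A \<or> quasi_irreducible k p A \<or> quasi_irreducible k p (inv_cocycle A))"
  note pv = assms(1) and sl = assms(2)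
  let ?I = "inv_cocycle A"
  have d0: "det (A j) \<noteq> 0" if "j \<in> {1..k}" for j
  proof -
    have "SL2pm (A j)" using sl that by blast
    then show ?thesis unfolding SL2pm_def by auto
  qed
  have IA: "\<forall>j\<in>{1..k}. ?I j ** A j = mat 1" using minv(1)[OF d0] unfolding inv_cocycle_def by auto
  have AI: "\<forall>j\<in>{1..k}. A j ** ?I j = mat 1" using minv(2)[OF d0] unfolding inv_cocycle_def by auto
  have slI: "\<forall>j\<in>{1..k}. SL2pm (?I j)" using sl det_minv unfolding inv_cocycle_def by auto
  obtain l where l: "inv_line k A l" "lyap_line k p A l < lyap k p A"
    using H unfolding quasi_irreducible_def by blast
  obtain l' where l': "inv_line k ?I l'" "lyap_line k p ?I l' < lyap k p ?I"
    using H unfolding quasi_irreducible_def by blast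
  obtain u where u: "norm u = 1" "l = span {u}" "inv_line k ?I l"
      "\<forall>j\<in>{1..k}. line_eig (?I j) l = inverse (line_eig (A j) l)"
    by (rule inv_line_transfer[OF l(1) IA])
  obtain u' where u': "norm u' = 1" "l' = span {u'}" "inv_line k A l'"
    by (rule inv_line_transfer[OF l'(1) AI])
  have "l = l'"
  proof (rule ccontr)
    assume "l \<noteq> l'"
    moreover have "u \<noteq> 0" "u' \<noteq> 0" using u(1) u'(1) by auto
    ultimately have "l \<inter> l' = {0}" using line_transversal[of u u'] u(2) u'(2) by simp
    then have "diagonalizable k A" unfolding diagonalizable_def using l(1) u'(3) by blast
    then show False using H by blast
  qed
  have LI: "lyap_line k p ?I l = - lyap_line k p A l"
    unfolding lyap_line_def sum_negf[symmetric]
    by (intro sum.cong refl) (simp add: u(4) ln_inverse abs_inverse)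
  show False
  proof (cases "lyap_line k p A l \<ge> 0")
    case True
    then have "lyap k p A = lyap_line k p A l" by (rule key[OF pv sl l(1)])
    then show False using l(2) by simp
  next
    case False
    then have "lyap_line k p ?I l \<ge> 0" using LI by simp
    then have "lyap k p ?I = lyap_line k p ?I l" by (rule key[OF pv slI u(3)])
    then show False using l'(2) \<open>l = l'\<close> by simp
  qed
qed

end
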